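(* Let $I$ and ${\cal Q}_I$ be as in the context, let $G'$ be a chordal sandwich of $({\rm int^*}({\cal Q}_I),{\rm forb}({\cal Q}_I))$, and let $1\le i\le n$. Then: (a) there is $W\in\{v_i,\overline{v_i}\}$ such that for all $j\in\Delta_i$, the vertex $K^j_W$ is adjacent to $B$ in $G'$; (b) for each $j\in\Delta_i$ and each $W\in\{v_i,\overline{v_i}\}$, if $K^j_W$ is adjacent to $B$ in $G'$, then each of the vertices $S^j_W$, $K^j_W$, and $L^j_W$ (if $L^j_W$ is defined) is adjacent in $G'$ to each of $B$, $A_i$, $H_W$, $H_{\overline W}$, $F^j$.
   Context: Instance: $I$ has variables $v_1,\ldots,v_n$ and clauses ${\cal C}_1,\ldots,{\cal C}_m$; each clause is an ordered triple of literals ${\cal C}_j=X\vee Y\vee Z$ with no variable occurring twice in a clause. Literals are $v_i$ or $\overline{v_i}$; $\overline W$ is the negation of $W$. $\Delta_i$ is the set of $j$ such that $v_i$ or $\overline{v_i}$ occurs in ${\cal C}_j$. Ground set ${\cal X}_I$: $\alpha_{v_i},\alpha_{\overline{v_i}}$; $\beta^j_{v_i},\beta^j_{\overline{v_i}}$ ($j\in\Delta_i$); $\gamma^j_1,\gamma^j_2,\gamma^j_3,\lambda^j$ ($1\le j\le m$); $\delta,\mu$. Sets: $B=\{\mu,\delta\}$, $H_{v_i}=\{\alpha_{v_i},\delta\}$, $H_{\overline{v_i}}=\{\alpha_{\overline{v_i}},\delta\}$, $A_i=\{\alpha_{v_i},\alpha_{\overline{v_i}}\}$, $S^j_{v_i}=\{\alpha_{v_i},\beta^j_{v_i}\}$,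 $S^j_{\overline{v_i}}=\{\alpha_{\overline{v_i}},\beta^j_{\overline{v_i}}\}$ ($j\in\Delta_i$); for ${\cal C}_j=X\vee Y\vee Z$: $K^j_{\overline X}=\{\beta^j_X,\gamma^j_1\}$, $K^j_{\overline Y}=\{\beta^j_Y,\gamma^j_2\}$, $K^j_{\overline Z}=\{\beta^j_Z,\gamma^j_3\}$, $K^j_X=\{\beta^j_{\overline X},\lambda^j\}$, $K^j_Y=\{\beta^j_{\overline Y},\lambda^j\}$, $K^j_Z=\{\beta^j_{\overline Z},\lambda^j\}$, $L^j_X=\{\beta^j_{\overline X},\gamma^j_2\}$, $L^j_Y=\{\beta^j_{\overline Y},\gamma^j_3\}$, $L^j_Z=\{\beta^j_{\overline Z},\gamma^j_1\}$ (so $L^j_W$ is defined only for the three literals $W$ occurring in ${\cal C}_j$), $D^j_p=\{\gamma^j_p,\lambda^j\}$, $F^j=\{\lambda^j,\mu\}$. Objects indexed by a literal mean the one for that literal. ${\cal Q}_I$ is the collection of partial splits: $A_i|B$; $D^j_p|B$ ($p=1,2,3$); $S^j_{v_i}|S^{j'}_{\overline{v_i}}$ ($j,j'\in\Delta_i$); $S^j_{v_i}|K^{j'}_{\overline{v_i}}$, $S^j_{\overline{v_i}}|K^{j'}_{v_i}$ ($j<j'$ in $\Delta_i$); $K^j_{\overline{v_i}}|F^{j'}$, $K^j_{v_i}|F^{j'}$ ($j\in\Delta_i$, $j<j'\le m$); $H_{v_{i'}}|S^j_{v_i}$, $H_{\overline{v_{i'}}}|S^j_{v_i}$, $H_{v_{i'}}|S^j_{\overline{v_i}}$,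 $H_{\overline{v_{i'}}}|S^j_{\overline{v_i}}$ ($1\le i'<i\le n$, $j\in\Delta_i$); $H_{\overline{v_i}}|F^j$, $H_{v_i}|F^j$ (all $i,j$); for each ${\cal C}_j=X\vee Y\vee Z$: $K^j_{\overline X}|K^j_X$, $K^j_{\overline Y}|K^j_Y$, $K^j_{\overline Z}|K^j_Z$, $K^j_{\overline X}|L^j_X$, $K^j_{\overline Y}|L^j_Y$, $K^j_{\overline Z}|L^j_Z$, $S^j_Y|K^j_X$, $S^j_Z|K^j_Y$, $S^j_X|K^j_Z$, $S^j_Z|L^j_X$, $S^j_X|L^j_Y$, $S^j_Y|L^j_Z$. ${\rm int^*}({\cal Q}_I)$: vertices are the 2-sets occurring as cells of members of ${\cal Q}_I$, adjacent iff they intersect. ${\rm forb}({\cal Q}_I)$: same vertices, $P,P'$ adjacent iff $P|P'\in{\cal Q}_I$. A chordal sandwich of $(G_1,G_2)$ (edge-disjoint, same vertex set) is a chordal graph (no induced cycle of length $\ge4$) on that vertex set containing all edges of $G_1$ and none of $G_2$. *)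

theory Defs
  imports Main
begin

text \<open>Literals: (i, True) is v_i, (i, False) is the negation of v_i.
  A clause is an ordered triple of literals; an instance is given by
  n, m and a map cl from clause indices 1..m to triples.\<close>

type_synonym lit = "nat \<times> bool"

definition neg :: "lit \<Rightarrow> lit" where
  "neg w = (fst w, \<not> snd w)"

definition pos :: "nat \<Rightarrow> lit" where "pos i = (i, True)"
definition ng :: "nat \<Rightarrow> lit" where "ng i = (i, False)"

type_synonym clauses = "nat \<Rightarrow> lit \<times> lit \<times> lit"

definition cX :: "clauses \<Rightarrow> nat \<Rightarrow> lit" where "cX cl j = fst (cl j)"
definition cY :: "clauses \<Rightarrow> nat \<Rightarrow> lit" where "cY cl j = fst (snd (cl j))"
definition cZ :: "clauses \<Rightarrow> nat \<Rightarrow> lit" where "cZ cl j = snd (snd (cl j))"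

definition wf_instance :: "nat \<Rightarrow> nat \<Rightarrow> clauses \<Rightarrow> bool" where
  "wf_instance n m cl \<longleftrightarrow> (\<forall>j\<in>{1..m}.
      fst (cX cl j) \<in> {1..n} \<and> fst (cY cl j) \<in> {1..n} \<and> fst (cZ cl j) \<in> {1..n} \<and>
      fst (cX cl j) \<noteq> fst (cY cl j) \<and> fst (cX cl j) \<noteq> fst (cZ cl j) \<and>
      fst (cY cl j) \<noteq> fst (cZ cl j))"

definition Dl :: "nat \<Rightarrow> clauses \<Rightarrow> nat \<Rightarrow> nat set" where
  "Dl m cl i = {j\<in>{1..m}. fst (cX cl j) = i \<or> fst (cY cl j) = i \<or> fst (cZ cl j) = i}"

datatype elem = EAlpha lit | EBeta nat lit | EGamma nat nat | ELambda nat | EDelta | EMu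

definition B :: "elem set" where "B = {EMu, EDelta}"
definition H :: "lit \<Rightarrow> elem set" where "H w = {EAlpha w, EDelta}"
definition A :: "nat \<Rightarrow> elem set" where "A i = {EAlpha (pos i), EAlpha (ng i)}"
definition S :: "nat \<Rightarrow> lit \<Rightarrow> elem set" where "S j w = {EAlpha w, EBeta j w}"

text \<open>K^j_W, defined for the six literals W, neg W with W in clause j
  (the empty set elsewhere, never used).\<close>
definition K :: "clauses \<Rightarrow> nat \<Rightarrow> lit \<Rightarrow> elem set" where
  "K cl j w =
    (if w = neg (cX cl j) then {EBeta j (cX cl j), EGamma j 1}
     else if w = neg (cY cl j) then {EBeta j (cY cl j), EGamma j 2}
     else if w = neg (cZ cl j) then {EBeta j (cZ cl j), EGamma j 3}
     else if w = cX cl j then {EBeta j (neg (cX cl j)), ELambda j}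
     else if w = cY cl j then {EBeta j (neg (cY cl j)), ELambda j}
     else if w = cZ cl j then {EBeta j (neg (cZ cl j)), ELambda j}
     else {})"

text \<open>L^j_W, defined only for the three literals W occurring in clause j.\<close>
definition in_clause :: "clauses \<Rightarrow> nat \<Rightarrow> lit \<Rightarrow> bool" where
  "in_clause cl j w \<longleftrightarrow> w = cX cl j \<or> w = cY cl j \<or> w = cZ cl j"

definition L :: "clauses \<Rightarrow> nat \<Rightarrow> lit \<Rightarrow> elem set" where
  "L cl j w =
    (if w = cX cl j then {EBeta j (neg (cX cl j)), EGamma j 2}
     else if w = cY cl j then {EBeta j (neg (cY cl j)), EGamma j 3}
     else if w = cZ cl j then {EBeta j (neg (cZ cl j)), EGamma j 1}
     else {})"

definition D :: "nat \<Rightarrow> nat \<Rightarrow> elem set" where "D j p = {EGamma j p, ELambda j}"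
definition F :: "nat \<Rightarrow> elem set" where "F j = {ELambda j, EMu}"

text \<open>Partial splits P|P' are represented as pairs (P, P').\<close>
definition clause_splits :: "clauses \<Rightarrow> nat \<Rightarrow> (elem set \<times> elem set) set" where
  "clause_splits cl j = (let X = cX cl j; Y = cY cl j; Z = cZ cl j in
     {(K cl j (neg X), K cl j X), (K cl j (neg Y), K cl j Y), (K cl j (neg Z), K cl j Z),
      (K cl j (neg X), L cl j X), (K cl j (neg Y), L cl j Y), (K cl j (neg Z), L cl j Z),
      (S j Y, K cl j X), (S j Z, K cl j Y), (S j X, K cl j Z),
      (S j Z, L cl j X), (S j X, L cl j Y), (S j Y, L cl j Z)})"

definition QI :: "nat \<Rightarrow> nat \<Rightarrow> clauses \<Rightarrow> (elem set \<times> elem set) set" where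
  "QI n m cl =
     {(A i, B) | i. i \<in> {1..n}}
   \<union> {(D j p, B) | j p. j \<in> {1..m} \<and> p \<in> {1,2,3}}
   \<union> {(S j (pos i), S j' (ng i)) | i j j'. i \<in> {1..n} \<and> j \<in> Dl m cl i \<and> j' \<in> Dl m cl i}
   \<union> {(S j (pos i), K cl j' (ng i)) | i j j'. i \<in> {1..n} \<and> j \<in> Dl m cl i \<and> j' \<in> Dl m cl i \<and> j < j'}
   \<union> {(S j (ng i), K cl j' (pos i)) | i j j'. i \<in> {1..n} \<and> j \<in> Dl m cl i \<and> j' \<in> Dl m cl i \<and> j < j'}
   \<union> {(K cl j (ng i), F j') | i j j'. i \<in> {1..n} \<and> j \<in> Dl m cl i \<and> j < j' \<and> j' \<le> m}
   \<union> {(K cl j (pos i), F j') | i j j'. i \<in> {1..n} \<and> j \<in> Dl m cl i \<and> j < j' \<and> j' \<le> m}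
   \<union> {(H w', S j w) | w' w j. 1 \<le> fst w' \<and> fst w' < fst w \<and> fst w \<le> n \<and> j \<in> Dl m cl (fst w)}
   \<union> {(H w, F j) | w j. fst w \<in> {1..n} \<and> j \<in> {1..m}}
   \<union> (\<Union>j\<in>{1..m}. clause_splits cl j)"

definition vtx :: "(elem set \<times> elem set) set \<Rightarrow> elem set set" where
  "vtx Q = {P. \<exists>P'. (P, P') \<in> Q \<or> (P', P) \<in> Q}"

definition int_star :: "(elem set \<times> elem set) set \<Rightarrow> (elem set \<times> elem set) set" where
  "int_star Q = {(P, P'). P \<in> vtx Q \<and> P' \<in> vtx Q \<and> P \<noteq> P' \<and> P \<inter> P' \<noteq> {}}"

definition forb :: "(elem set \<times> elem set) set \<Rightarrow> (elem set \<times> elem set) set" where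
  "forb Q = {(P, P'). (P, P') \<in> Q \<or> (P', P) \<in> Q}"

definition graph_on :: "'a set \<Rightarrow> ('a \<times> 'a) set \<Rightarrow> bool" where
  "graph_on V E \<longleftrightarrow> E \<subseteq> V \<times> V \<and> sym E \<and> irrefl E"

definition induced_cycle :: "('a \<times> 'a) set \<Rightarrow> 'a list \<Rightarrow> bool" where
  "induced_cycle E cs \<longleftrightarrow> distinct cs \<and>
     (\<forall>a < length cs. \<forall>b < length cs. a \<noteq> b \<longrightarrow>
        ((cs ! a, cs ! b) \<in> E \<longleftrightarrow> (b = Suc a mod length cs \<or> a = Suc b mod length cs)))"

definition chordal :: "'a set \<Rightarrow> ('a \<times> 'a) set \<Rightarrow> bool" where
  "chordal V E \<longleftrightarrow> graph_on V E \<and>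
     \<not> (\<exists>cs. set cs \<subseteq> V \<and> length cs \<ge> 4 \<and> induced_cycle E cs)"

definition chordal_sandwich :: "'a set \<Rightarrow> ('a \<times> 'a) set \<Rightarrow> ('a \<times> 'a) set \<Rightarrow> ('a \<times> 'a) set \<Rightarrow> bool" where
  "chordal_sandwich V E1 E2 G \<longleftrightarrow> chordal V G \<and> E1 \<subseteq> G \<and> G \<inter> E2 = {}"

end

theory Submission
  imports Defs
begin


fun wk :: "('a \<times> 'a) set \<Rightarrow> 'a list \<Rightarrow> bool" where
  "wk E [] = True" | "wk E [x] = True" | "wk E (x#y#xs) = ((x,y)\<in>E \<and> wk E (y#xs))"

lemma wk_Cons: "wk E (x#xs) \<longleftrightarrow> (xs \<noteq> [] \<longrightarrow> (x, hd xs) \<in> E) \<and> wk E xs"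
  by (cases xs) auto

lemma wk_append: "wk E (xs @ ys) \<longleftrightarrow> wk E xs \<and> wk E ys \<and> (xs \<noteq> [] \<and> ys \<noteq> [] \<longrightarrow> (last xs, hd ys) \<in> E)"
  by (induction xs) (auto simp: wk_Cons)

lemma wk_nth: "wk E ps \<longleftrightarrow> (\<forall>k. Suc k < length ps \<longrightarrow> (ps!k, ps!Suc k) \<in> E)"
proof (induction ps)
  case Nil then show ?case by simp
next
  case (Cons x xs)
  show ?case
  proof (cases xs)
    case Nil then show ?thesis by simp
  next
    case (Cons y ys)
    have "(\<forall>k. Suc k < length (x#xs) \<longrightarrow> ((x#xs)!k, (x#xs)!Suc k) \<in> E) \<longleftrightarrow>
          (x,y) \<in> E \<and> (\<forall>k. Suc k < length xs \<longrightarrow> (xs!k, xs!Suc k) \<in> E)"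
      using Cons by (auto simp: less_Suc_eq_0_disj)
    then show ?thesis using Cons.IH Cons by (simp add: wk_Cons)
  qed
qed

lemma wk_take_drop: "wk E xs \<Longrightarrow> wk E (take n xs) \<and> wk E (drop n xs)"
  using wk_append[of E "take n xs" "drop n xs"] by simp

lemma PL_aux:
  assumes ch: "chordal V G" and xV: "x \<in> V" and xa: "(x,a)\<in>G" and xb: "(x,b)\<in>G"
    and nab: "(a,b)\<notin>G" and ab: "a\<noteq>b"
  shows "ps \<noteq> [] \<Longrightarrow> hd ps = a \<Longrightarrow> last ps = b \<Longrightarrow> set ps \<subseteq> V \<Longrightarrow> wk G ps \<Longrightarrow>
     \<forall>v\<in>set ps. v = a \<or> v = b \<or> ((x,v)\<notin>G \<and> v\<noteq>x) \<Longrightarrow> False"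
proof (induction ps rule: length_induct)
  case (1 ps)
  have gV: "graph_on V G" using ch unfolding chordal_def by simp
  hence symG: "\<And>u v. (u,v)\<in>G \<Longrightarrow> (v,u)\<in>G" and irr: "\<And>u. (u,u)\<notin>G"
    unfolding graph_on_def by (auto dest: symD simp: irrefl_def)
  note P = "1.prems"
  have IH: "\<And>ys. length ys < length ps \<Longrightarrow> ys \<noteq> [] \<Longrightarrow> hd ys = a \<Longrightarrow> last ys = b \<Longrightarrow> set ys \<subseteq> V \<Longrightarrow> wk G ys \<Longrightarrow>
     \<forall>v\<in>set ys. v = a \<or> v = b \<or> ((x,v)\<notin>G \<and> v\<noteq>x) \<Longrightarrow> False"
    using "1.IH" by blast
  have wn: "\<And>k. Suc k < length ps \<Longrightarrow> (ps!k, ps!Suc k) \<in> G" using P(5) wk_nth by blast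
  have short: False if kl: "Suc k < l" "l < length ps" "(ps!k,ps!l) \<in> G" for k l
  proof -
    define ys where "ys = take (Suc k) ps @ drop l ps"
    have tk: "take (Suc k) ps \<noteq> []" "last (take (Suc k) ps) = ps!k" using kl P(1)
      by (auto simp: take_Suc_conv_app_nth)
    have dr: "drop l ps \<noteq> []" "hd (drop l ps) = ps!l" "last (drop l ps) = last ps" using kl
      by (auto simp: hd_drop_conv_nth)
    show False
    proof (rule IH[of ys])
      show "length ys < length ps" using kl unfolding ys_def by simp
      show "ys \<noteq> []" unfolding ys_def using tk by simp
      show "hd ys = a" unfolding ys_def using tk P(2) P(1) by (simp add: hd_append hd_take)
      show "last ys = b" unfolding ys_def using dr P(3) by simp
      have "set ys \<subseteq> set ps" unfolding ys_def using set_drop_subset set_take_subset by (metis Un_least set_append)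
      then show "set ys \<subseteq> V" "\<forall>v\<in>set ys. v = a \<or> v = b \<or> ((x,v)\<notin>G \<and> v\<noteq>x)" using P(4,6) by auto
      show "wk G ys" unfolding ys_def wk_append using wk_take_drop[OF P(5)] tk dr kl by simp
    qed
  qed
  have dup: False if kl: "k < l" "l < length ps" "ps!k = ps!l" for k l
  proof -
    define ys where "ys = take k ps @ drop l ps"
    have dr: "drop l ps \<noteq> []" "hd (drop l ps) = ps!l" "last (drop l ps) = last ps" using kl
      by (auto simp: hd_drop_conv_nth)
    show False
    proof (rule IH[of ys])
      show "length ys < length ps" using kl unfolding ys_def by simp
      show "ys \<noteq> []" unfolding ys_def using dr by simp
      show "hd ys = a"
      proof (cases k)
        case 0 then show ?thesis unfolding ys_def using dr kl P(1,2) by (simp add: hd_conv_nth)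
      next
        case (Suc k') then show ?thesis unfolding ys_def using kl P(1,2) by (simp add: hd_append hd_take)
      qed
      show "last ys = b" unfolding ys_def using dr P(3) by simp
      have "set ys \<subseteq> set ps" unfolding ys_def using set_drop_subset set_take_subset by (metis Un_least set_append)
      then show "set ys \<subseteq> V" "\<forall>v\<in>set ys. v = a \<or> v = b \<or> ((x,v)\<notin>G \<and> v\<noteq>x)" using P(4,6) by auto
      show "wk G ys"
      proof (cases k)
        case 0 then show ?thesis unfolding ys_def using wk_take_drop[OF P(5)] by simp
      next
        case (Suc k')
        have "take k ps \<noteq> []" "last (take k ps) = ps!k'" using kl Suc
          by (auto simp: take_Suc_conv_app_nth)
        moreover have "(ps!k', ps!k) \<in> G" using wn[of k'] Suc kl by simp
        ultimately show ?thesis unfolding ys_def wk_append using wk_take_drop[OF P(5)] dr kl by simp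
      qed
    qed
  qed
  have dist: "distinct ps" unfolding distinct_conv_nth
    using dup by (metis linorder_neqE_nat)
  have nochord: "\<And>k l. k < length ps \<Longrightarrow> l < length ps \<Longrightarrow> (ps!k,ps!l)\<in>G \<Longrightarrow> l = Suc k \<or> k = Suc l"
  proof -
    fix k l assume "k < length ps" "l < length ps" "(ps!k,ps!l)\<in>G"
    then show "l = Suc k \<or> k = Suc l"
      using short[of k l] short[of l k] symG irr
      by (metis Suc_lessI linorder_neqE_nat)
  qed
  define N where "N = length ps"
  have a0: "ps!0 = a" using P(1,2) by (simp add: hd_conv_nth)
  have bN: "ps!(N-1) = b" using P(1,3) unfolding N_def by (simp add: last_conv_nth)
  have N3: "N \<ge> 3"
  proof (rule ccontr)
    assume "\<not> N \<ge> 3"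
    moreover have "N \<noteq> 0" using P(1) unfolding N_def by simp
    ultimately have "N = 1 \<or> N = 2" by arith
    then show False
    proof
      assume "N = 1" then show False using a0 bN ab by simp
    next
      assume "N = 2" then show False using a0 bN nab wn[of 0] unfolding N_def by simp
    qed
  qed
  have xnot: "x \<notin> set ps" using P(6) xa xb irr by metis
  have inner: "(x, ps!k) \<notin> G" if "0 < k" "k < N - 1" for k
  proof -
    have kN: "k < length ps" "N - 1 < length ps" "0 < length ps" using that N3 unfolding N_def by auto
    have "ps!k \<noteq> ps!0" using dist kN that by (simp add: nth_eq_iff_index_eq)
    moreover have "ps!k \<noteq> ps!(N-1)" using dist kN that by (simp add: nth_eq_iff_index_eq)
    ultimately have "ps!k \<noteq> a" "ps!k \<noteq> b" using a0 bN by auto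
    moreover have "ps!k \<in> set ps" using kN by simp
    ultimately show ?thesis using P(6) by blast
  qed
  define cs where "cs = x # ps"
  have "induced_cycle G cs"
    unfolding induced_cycle_def
  proof (intro conjI allI impI)
    show "distinct cs" unfolding cs_def using dist xnot by simp
    fix p q assume pq: "p < length cs" "q < length cs" "p \<noteq> q"
    have lc: "length cs = Suc N" unfolding cs_def N_def by simp
    have modS: "\<And>r. r < Suc N \<Longrightarrow> Suc r mod Suc N = (if r = N then 0 else Suc r)"
      by auto
    show "(cs!p, cs!q) \<in> G \<longleftrightarrow> (q = Suc p mod length cs \<or> p = Suc q mod length cs)"
    proof (cases "p = 0")
      case True
      then have q0: "q > 0" using pq by simp
      have "(cs!p, cs!q) \<in> G \<longleftrightarrow> (x, ps!(q-1)) \<in> G" unfolding cs_def using True q0 by simp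
      also have "\<dots> \<longleftrightarrow> (q = 1 \<or> q = N)"
      proof
        assume "(x, ps!(q-1)) \<in> G" then show "q = 1 \<or> q = N" using inner[of "q-1"] q0 pq lc by force
      next
        assume "q = 1 \<or> q = N" then show "(x, ps!(q-1)) \<in> G" using a0 bN xa xb by auto
      qed
      also have "\<dots> \<longleftrightarrow> (q = Suc p mod length cs \<or> p = Suc q mod length cs)"
        using True lc pq N3 modS[of q] by auto
      finally show ?thesis .
    next
      case pF: False
      show ?thesis
      proof (cases "q = 0")
        case True
        have "(cs!p, cs!q) \<in> G \<longleftrightarrow> (x, ps!(p-1)) \<in> G" unfolding cs_def using True pF symG
          by (cases p) auto
        also have "\<dots> \<longleftrightarrow> (p = 1 \<or> p = N)"
        proof
          assume "(x, ps!(p-1)) \<in> G" then show "p = 1 \<or> p = N" using inner[of "p-1"] pF pq lc by force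
        next
          assume "p = 1 \<or> p = N" then show "(x, ps!(p-1)) \<in> G" using a0 bN xa xb by auto
        qed
        also have "\<dots> \<longleftrightarrow> (q = Suc p mod length cs \<or> p = Suc q mod length cs)"
          using True lc pq N3 modS[of p] by auto
        finally show ?thesis .
      next
        case qF: False
        have "(cs!p, cs!q) \<in> G \<longleftrightarrow> (ps!(p-1), ps!(q-1)) \<in> G" unfolding cs_def using pF qF
          by (cases p; cases q) auto
        also have "\<dots> \<longleftrightarrow> (q = Suc p \<or> p = Suc q)"
        proof
          assume "(ps!(p-1), ps!(q-1)) \<in> G"
          then have "q-1 = Suc (p-1) \<or> p-1 = Suc (q-1)" using nochord[of "p-1" "q-1"] pF qF pq lc unfolding N_def by simp
          then show "q = Suc p \<or> p = Suc q" using pF qF by arith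
        next
          assume "q = Suc p \<or> p = Suc q"
          then show "(ps!(p-1), ps!(q-1)) \<in> G"
          proof
            assume "q = Suc p" then show ?thesis using wn[of "p-1"] pF pq lc unfolding N_def by simp
          next
            assume "p = Suc q" then show ?thesis using wn[of "q-1"] qF pq lc symG unfolding N_def by simp
          qed
        qed
        also have "\<dots> \<longleftrightarrow> (q = Suc p mod length cs \<or> p = Suc q mod length cs)"
          using lc pq modS[of p] modS[of q] pF qF by auto
        finally show ?thesis .
      qed
    qed
  qed
  moreover have "set cs \<subseteq> V" "length cs \<ge> 4" unfolding cs_def N_def using P(4) xV N3 N_def by auto
  ultimately show False using ch unfolding chordal_def by blast
qed

lemma PL3:
  assumes "chordal V G" "{x,a,c,b} \<subseteq> V" "(x,a)\<in>G" "(x,b)\<in>G" "a\<noteq>b" "(a,c)\<in>G" "(c,b)\<in>G" "(x,c)\<notin>G" "c\<noteq>x"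
  shows "(a,b)\<in>G"
  using PL_aux[OF assms(1), of x a b "[a,c,b]"] assms by auto

lemma PL4:
  assumes "chordal V G" "{x,a,c,d,b} \<subseteq> V" "(x,a)\<in>G" "(x,b)\<in>G" "a\<noteq>b" "(a,c)\<in>G" "(c,d)\<in>G" "(d,b)\<in>G"
    "(x,c)\<notin>G" "c\<noteq>x" "(x,d)\<notin>G" "d\<noteq>x"
  shows "(a,b)\<in>G"
  using PL_aux[OF assms(1), of x a b "[a,c,d,b]"] assms by auto

lemma PL5:
  assumes "chordal V G" "{x,a,c,d,e,b} \<subseteq> V" "(x,a)\<in>G" "(x,b)\<in>G" "a\<noteq>b" "(a,c)\<in>G" "(c,d)\<in>G" "(d,e)\<in>G" "(e,b)\<in>G"
    "(x,c)\<notin>G" "c\<noteq>x" "(x,d)\<notin>G" "d\<noteq>x" "(x,e)\<notin>G" "e\<noteq>x"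
  shows "(a,b)\<in>G"
  using PL_aux[OF assms(1), of x a b "[a,c,d,e,b]"] assms by auto




lemma gadget:
  assumes ch: "chordal V G"
  and inV: "{vb,vf,vd,vq,va,hu,hn,su,sn,ku,kn,lu} \<subseteq> V"
  and dist: "distinct [vb,vf,vd,vq,va,hu,hn,su,sn,ku,kn,lu]"
  and e: "(vb,hu)\<in>G" "(vb,hn)\<in>G" "(vb,vf)\<in>G" "(hu,va)\<in>G" "(hn,va)\<in>G" "(hu,su)\<in>G" "(hn,sn)\<in>G"
    "(va,su)\<in>G" "(va,sn)\<in>G" "(su,kn)\<in>G" "(sn,ku)\<in>G" "(sn,lu)\<in>G" "(ku,vf)\<in>G" "(ku,vd)\<in>G"
    "(kn,vd)\<in>G" "(vf,vd)\<in>G" "(lu,vq)\<in>G" "(vf,vq)\<in>G"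
  and ne: "(va,vb)\<notin>G" "(vd,vb)\<notin>G" "(vq,vb)\<notin>G" "(hu,vf)\<notin>G" "(hn,vf)\<notin>G" "(su,sn)\<notin>G" "(kn,ku)\<notin>G"
  shows "((ku,vb)\<in>G \<or> (kn,vb)\<in>G)
    \<and> ((ku,vb)\<in>G \<longrightarrow> (\<forall>P\<in>{su,ku,lu}. \<forall>R\<in>{vb,va,hu,hn,vf}. (P,R)\<in>G))
    \<and> ((kn,vb)\<in>G \<longrightarrow> (\<forall>P\<in>{sn,kn}. \<forall>R\<in>{vb,va,hn,hu,vf}. (P,R)\<in>G))"
proof -
  have symG: "\<And>u v. (u,v)\<in>G \<Longrightarrow> (v,u)\<in>G"
    using ch unfolding chordal_def graph_on_def by (auto dest: symD)
  have symN: "\<And>u v. (u,v)\<notin>G \<Longrightarrow> (v,u)\<notin>G" using symG by blast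
  note E = e e[THEN symG]
  note N = ne ne[THEN symN]
  have vV: "vb\<in>V" "vf\<in>V" "vd\<in>V" "vq\<in>V" "va\<in>V" "hu\<in>V" "hn\<in>V" "su\<in>V" "sn\<in>V" "ku\<in>V" "kn\<in>V" "lu\<in>V"
    using inV by auto
  have neq: "vb\<noteq>vf" "vb\<noteq>vd" "vb\<noteq>vq" "vb\<noteq>va" "vb\<noteq>hu" "vb\<noteq>hn" "vb\<noteq>su" "vb\<noteq>sn" "vb\<noteq>ku" "vb\<noteq>kn" "vb\<noteq>lu" "vf\<noteq>vd" "vf\<noteq>vq" "vf\<noteq>va" "vf\<noteq>hu" "vf\<noteq>hn" "vf\<noteq>su" "vf\<noteq>sn" "vf\<noteq>ku" "vf\<noteq>kn" "vf\<noteq>lu" "vd\<noteq>vq" "vd\<noteq>va" "vd\<noteq>hu" "vd\<noteq>hn" "vd\<noteq>su" "vd\<noteq>sn" "vd\<noteq>ku" "vd\<noteq>kn" "vd\<noteq>lu" "vq\<noteq>va" "vq\<noteq>hu" "vq\<noteq>hn" "vq\<noteq>su" "vq\<noteq>sn" "vq\<noteq>ku" "vq\<noteq>kn" "vq\<noteq>lu" "va\<noteq>hu" "va\<noteq>hn" "va\<noteq>su" "va\<noteq>sn" "va\<noteq>ku" "va\<noteq>kn" "va\<noteq>lu" "hu\<noteq>hn" "hu\<noteq>su" "hu\<noteq>sn" "hu\<noteq>ku" "hu\<noteq>kn" "hu\<noteq>lu" "hn\<noteq>su" "hn\<noteq>sn" "hn\<noteq>ku" "hn\<noteq>kn" "hn\<noteq>lu"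 "su\<noteq>sn" "su\<noteq>ku" "su\<noteq>kn" "su\<noteq>lu" "sn\<noteq>ku" "sn\<noteq>kn" "sn\<noteq>lu" "ku\<noteq>kn" "ku\<noteq>lu" "kn\<noteq>lu"
    using dist by auto
  note S = vV E N neq neq[THEN not_sym]
  note P3 = PL3[OF ch] and P4 = PL4[OF ch] and P5 = PL5[OF ch]
  have kex: "\<not> ((ku,vb)\<in>G \<and> (kn,vb)\<in>G)"
  proof
    assume h: "(ku,vb)\<in>G \<and> (kn,vb)\<in>G"
    have "(ku,kn)\<in>G" by (rule P3[of vd ku vb kn]) (simp_all add: h S h[THEN conjunct1, THEN symG] h[THEN conjunct2, THEN symG] h[THEN conjunct1] h[THEN conjunct2])
    then show False using N by simp
  qed
  have sex: "\<not> ((su,vb)\<in>G \<and> (sn,vb)\<in>G)"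
  proof
    assume h: "(su,vb)\<in>G \<and> (sn,vb)\<in>G"
    have "(su,sn)\<in>G" by (rule P3[of va su vb sn]) (simp_all add: h S h[THEN conjunct1, THEN symG] h[THEN conjunct2, THEN symG] h[THEN conjunct1] h[THEN conjunct2])
    then show False using N by simp
  qed
  have snb: "(sn,vb)\<in>G" if a: "(ku,vb)\<notin>G"
  proof (rule ccontr)
    assume h: "(sn,vb)\<notin>G"
    have "(hn,vf)\<in>G" by (rule P4[of vb hn sn ku vf]) (simp_all add: h h[THEN symN] a a[THEN symN] S)
    then show False using N by simp
  qed
  have sub: "(su,vb)\<in>G" if a: "(kn,vb)\<notin>G"
  proof (rule ccontr)
    assume h: "(su,vb)\<notin>G"
    have "(hu,vf)\<in>G" by (rule P5[of vb hu su kn vd vf]) (simp_all add: h h[THEN symN] a a[THEN symN] S)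
    then show False using N by simp
  qed
  have c1: "(ku,vb)\<in>G \<or> (kn,vb)\<in>G"
    using snb sub sex by blast
  have c2: "\<forall>P\<in>{su,ku,lu}. \<forall>R\<in>{vb,va,hu,hn,vf}. (P,R)\<in>G" if k: "(ku,vb)\<in>G"
  proof -
    have nk: "(kn,vb)\<notin>G" "(vb,kn)\<notin>G" using kex k symG by auto
    have sub: "(su,vb)\<in>G" using sub nk by blast
    have nsn: "(sn,vb)\<notin>G" "(vb,sn)\<notin>G" using sex sub symG by auto
    have "(ku,hn)\<in>G" by (rule P3[of vb ku sn hn]) (simp_all add: k nsn S k[THEN symG])
    moreover have "(ku,hu)\<in>G" by (rule P4[of vb ku sn va hu]) (simp_all add: k nsn S k[THEN symG])
    moreover have "(va,ku)\<in>G" by (rule P4[of sn va su vb ku]) (simp_all add: k sub nsn S k[THEN symG] sub[THEN symG])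
    moreover have "(su,hn)\<in>G"
    proof (rule ccontr)
      assume h: "(su,hn)\<notin>G"
      have "(va,vb)\<in>G" by (rule P3[of hn va su vb]) (simp_all add: h h[THEN symN] sub S sub[THEN symG])
      then show False using N by simp
    qed
    moreover have "(su,vf)\<in>G" by (rule P4[of vb su kn vd vf]) (simp_all add: sub nk S sub[THEN symG])
    moreover have lb: "(lu,vb)\<in>G"
    proof (rule ccontr)
      assume h: "(lu,vb)\<notin>G"
      have "(hn,vf)\<in>G" by (rule P5[of vb hn sn lu vq vf]) (simp_all add: h h[THEN symN] nsn S)
      then show False using N by simp
    qed
    moreover have "(lu,vf)\<in>G" by (rule P3[of vb lu vq vf]) (simp_all add: lb S lb[THEN symG])
    moreover have "(lu,hn)\<in>G" by (rule P3[of vb lu sn hn]) (simp_all add: lb nsn S lb[THEN symG])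
    moreover have "(lu,hu)\<in>G" by (rule P4[of vb lu sn va hu]) (simp_all add: lb nsn S lb[THEN symG])
    moreover have "(va,lu)\<in>G" by (rule P4[of sn va su vb lu]) (simp_all add: lb sub nsn S lb[THEN symG] sub[THEN symG])
    ultimately show ?thesis using k sub E symG by auto
  qed
  have c3: "\<forall>P\<in>{sn,kn}. \<forall>R\<in>{vb,va,hn,hu,vf}. (P,R)\<in>G" if k: "(kn,vb)\<in>G"
  proof -
    have nk: "(ku,vb)\<notin>G" "(vb,ku)\<notin>G" using kex k symG by auto
    have sub: "(sn,vb)\<in>G" using snb nk by blast
    have nsu: "(su,vb)\<notin>G" "(vb,su)\<notin>G" using sex sub symG by auto
    have "(kn,vf)\<in>G"
    proof (rule ccontr)
      assume h: "(kn,vf)\<notin>G"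
      have "(vb,vd)\<in>G" by (rule P3[of vf vb kn vd]) (simp_all add: h h[THEN symN] k S k[THEN symG])
      then show False using N by simp
    qed
    moreover have "(kn,hu)\<in>G" by (rule P3[of vb kn su hu]) (simp_all add: k nsu S k[THEN symG])
    moreover have "(kn,hn)\<in>G" by (rule P4[of vb kn su va hn]) (simp_all add: k nsu S k[THEN symG])
    moreover have "(va,kn)\<in>G" by (rule P4[of su va sn vb kn]) (simp_all add: k sub nsu S k[THEN symG] sub[THEN symG])
    moreover have "(sn,hu)\<in>G"
    proof (rule ccontr)
      assume h: "(sn,hu)\<notin>G"
      have "(va,vb)\<in>G" by (rule P3[of hu va sn vb]) (simp_all add: h h[THEN symN] sub S sub[THEN symG])
      then show False using N by simp
    qed
    moreover have "(sn,vf)\<in>G" by (rule P3[of vb sn ku vf]) (simp_all add: sub nk S sub[THEN symG])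
    ultimately show ?thesis using k sub E symG by auto
  qed
  show ?thesis using c1 c2 c3 by blast
qed

lemma cross:
  assumes ch: "chordal V G" and "{va,vb,s,t} \<subseteq> V" "distinct [va,vb,s,t]"
    "(s,vb)\<in>G" "(t,vb)\<in>G" "(va,s)\<in>G" "(va,t)\<in>G" "(s,t)\<notin>G" "(va,vb)\<notin>G"
  shows False
proof -
  have symG: "\<And>u v. (u,v)\<in>G \<Longrightarrow> (v,u)\<in>G"
    using ch unfolding chordal_def graph_on_def by (auto dest: symD)
  have "(s,t)\<in>G" by (rule PL3[OF ch, of va s vb t]) (use assms symG in auto)
  then show False using assms by simp
qed




lemma clause_info:
  assumes wf: "wf_instance n m cl" and j: "j \<in> Dl m cl i"
  shows "\<exists>t p q. in_clause cl j (i,t) \<and> \<not> in_clause cl j (i,\<not>t) \<and> p \<in> {1,2,3} \<and> q \<in> {1,2,3} \<and> p \<noteq> q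
    \<and> K cl j (i,\<not>t) = {EBeta j (i,t), EGamma j p} \<and> K cl j (i,t) = {EBeta j (i,\<not>t), ELambda j}
    \<and> L cl j (i,t) = {EBeta j (i,\<not>t), EGamma j q}
    \<and> (K cl j (i,\<not>t), K cl j (i,t)) \<in> clause_splits cl j \<and> (K cl j (i,\<not>t), L cl j (i,t)) \<in> clause_splits cl j"
proof -
  have jm: "j \<in> {1..m}" and o: "fst (cX cl j) = i \<or> fst (cY cl j) = i \<or> fst (cZ cl j) = i"
    using j unfolding Dl_def by auto
  have d: "fst (cX cl j) \<noteq> fst (cY cl j)" "fst (cX cl j) \<noteq> fst (cZ cl j)" "fst (cY cl j) \<noteq> fst (cZ cl j)"
    using wf jm unfolding wf_instance_def by auto
  obtain x1 x2 y1 y2 z1 z2 where xyz: "cX cl j = (x1,x2)" "cY cl j = (y1,y2)" "cZ cl j = (z1,z2)"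
    by (metis prod.exhaust)
  have d': "x1 \<noteq> y1" "x1 \<noteq> z1" "y1 \<noteq> z1" using d xyz by auto
  from o show ?thesis
  proof (elim disjE)
    assume "fst (cX cl j) = i"
    then have "x1 = i" using xyz by simp
    then show ?thesis using d'
      by (intro exI[of _ x2] exI[of _ "1::nat"] exI[of _ "2::nat"])
        (auto simp: xyz in_clause_def K_def L_def neg_def clause_splits_def Let_def)
  next
    assume "fst (cY cl j) = i"
    then have "y1 = i" using xyz by simp
    then show ?thesis using d'
      by (intro exI[of _ y2] exI[of _ "2::nat"] exI[of _ "3::nat"])
        (auto simp: xyz in_clause_def K_def L_def neg_def clause_splits_def Let_def)
  next
    assume "fst (cZ cl j) = i"
    then have "z1 = i" using xyz by simp
    then show ?thesis using d'
      by (intro exI[of _ z2] exI[of _ "3::nat"] exI[of _ "1::nat"])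
        (auto simp: xyz in_clause_def K_def L_def neg_def clause_splits_def Let_def)
  qed
qed




lemma vtxI: "(P,P') \<in> Q \<Longrightarrow> P \<in> vtx Q \<and> P' \<in> vtx Q"
  unfolding vtx_def by blast

lemma mem_AB: "i \<in> {1..n} \<Longrightarrow> (A i, B) \<in> QI n m cl"
proof -
  assume "i \<in> {1..n}"
  then have "(A i, B) \<in> {(A i, B) | i. i \<in> {1..n}}" by blast
  then show ?thesis unfolding QI_def by (intro UnI1)
qed
lemma mem_DB: "j \<in> {1..m} \<Longrightarrow> p \<in> {1,2,3} \<Longrightarrow> (D j p, B) \<in> QI n m cl"
proof -
  assume "j \<in> {1..m}" "p \<in> {1,2,3}"
  then have "(D j p, B) \<in> {(D j p, B) | j p. j \<in> {1..m} \<and> p \<in> {1,2,3}}" by blast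
  then show ?thesis unfolding QI_def by (intro UnI1 UnI2)
qed
lemma mem_SS: "i \<in> {1..n} \<Longrightarrow> j \<in> Dl m cl i \<Longrightarrow> j' \<in> Dl m cl i \<Longrightarrow> (S j (pos i), S j' (ng i)) \<in> QI n m cl"
proof -
  assume "i \<in> {1..n}" "j \<in> Dl m cl i" "j' \<in> Dl m cl i"
  then have "(S j (pos i), S j' (ng i)) \<in> {(S j (pos i), S j' (ng i)) | i j j'. i \<in> {1..n} \<and> j \<in> Dl m cl i \<and> j' \<in> Dl m cl i}" by blast
  then show ?thesis unfolding QI_def by (intro UnI1 UnI2)
qed
lemma mem_HF: "fst w \<in> {1..n} \<Longrightarrow> j \<in> {1..m} \<Longrightarrow> (H w, F j) \<in> QI n m cl"
proof -
  assume "fst w \<in> {1..n}" "j \<in> {1..m}"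
  then have "(H w, F j) \<in> {(H w, F j) | w j. fst w \<in> {1..n} \<and> j \<in> {1..m}}" by blast
  then show ?thesis unfolding QI_def by (intro UnI1 UnI2)
qed
lemma mem_cl: "j \<in> {1..m} \<Longrightarrow> x \<in> clause_splits cl j \<Longrightarrow> x \<in> QI n m cl"
proof -
  assume "j \<in> {1..m}" "x \<in> clause_splits cl j"
  then have "x \<in> (\<Union>j\<in>{1..m}. clause_splits cl j)" by blast
  then show ?thesis unfolding QI_def by (intro UnI2)
qed

lemma loc:
  assumes sw: "chordal_sandwich (vtx (QI n m cl)) (int_star (QI n m cl)) (forb (QI n m cl)) G"
    and i: "i \<in> {1..n}" and j: "j \<in> Dl m cl i"
    and pq: "p \<in> {1,2,3}" "q \<in> {1,2,3}" "p \<noteq> q"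
    and kn: "K cl j (i,\<not>t) = {EBeta j (i,t), EGamma j p}"
    and ku: "K cl j (i,t) = {EBeta j (i,\<not>t), ELambda j}"
    and lu: "L cl j (i,t) = {EBeta j (i,\<not>t), EGamma j q}"
    and c1: "(K cl j (i,\<not>t), K cl j (i,t)) \<in> clause_splits cl j"
    and c2: "(K cl j (i,\<not>t), L cl j (i,t)) \<in> clause_splits cl j"
  shows "((K cl j (i,t),B)\<in>G \<or> (K cl j (i,\<not>t),B)\<in>G)
    \<and> ((K cl j (i,t),B)\<in>G \<longrightarrow> (\<forall>P\<in>{S j (i,t),K cl j (i,t),L cl j (i,t)}. \<forall>R\<in>{B,A i,H (i,t),H (i,\<not>t),F j}. (P,R)\<in>G))
    \<and> ((K cl j (i,\<not>t),B)\<in>G \<longrightarrow> (\<forall>P\<in>{S j (i,\<not>t),K cl j (i,\<not>t)}. \<forall>R\<in>{B,A i,H (i,\<not>t),H (i,t),F j}. (P,R)\<in>G))"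
proof -
  define Q where "Q = QI n m cl"
  define V where "V = vtx Q"
  have ch: "chordal V G" and sub: "int_star Q \<subseteq> G" and dis: "G \<inter> forb Q = {}"
    using sw unfolding chordal_sandwich_def Q_def V_def by auto
  have Fo: "(P,P') \<in> G" if "P \<in> V" "P' \<in> V" "P \<noteq> P'" "P \<inter> P' \<noteq> {}" for P P'
    using sub that unfolding int_star_def V_def by auto
  have Nf: "(P,P') \<notin> G" if "(P,P') \<in> Q" for P P'
    using dis that unfolding forb_def by auto
  have jm: "j \<in> {1..m}" using j unfolding Dl_def by auto
  have qAB: "(A i, B) \<in> Q" using mem_AB[OF i] Q_def by simp
  have qDp: "(D j p, B) \<in> Q" and qDq: "(D j q, B) \<in> Q" using mem_DB[OF jm] pq Q_def by auto
  have qHu: "(H (i,t), F j) \<in> Q" and qHn: "(H (i,\<not>t), F j) \<in> Q" using mem_HF[OF _ jm] i Q_def by auto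
  have qSS: "(S j (i,t), S j (i,\<not>t)) \<in> Q \<or> (S j (i,\<not>t), S j (i,t)) \<in> Q"
    using mem_SS[OF i j j] Q_def by (cases t) (auto simp: pos_def ng_def)
  have qK: "(K cl j (i,\<not>t), K cl j (i,t)) \<in> Q" and qL: "(K cl j (i,\<not>t), L cl j (i,t)) \<in> Q"
    using mem_cl[OF jm] c1 c2 Q_def by auto
  have vS: "S j (i,t) \<in> V" "S j (i,\<not>t) \<in> V" using qSS vtxI V_def by blast+
  have vs: "B \<in> V" "A i \<in> V" "D j p \<in> V" "D j q \<in> V" "H (i,t) \<in> V" "H (i,\<not>t) \<in> V" "F j \<in> V"
    "K cl j (i,\<not>t) \<in> V" "K cl j (i,t) \<in> V" "L cl j (i,t) \<in> V"
    using qAB qDp qDq qHu qHn qK qL vtxI V_def by blast+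
  note eqs = kn ku lu B_def H_def A_def S_def D_def F_def pos_def ng_def
  have G: "((K cl j (i,t),B)\<in>G \<or> (K cl j (i,\<not>t),B)\<in>G)
    \<and> ((K cl j (i,t),B)\<in>G \<longrightarrow> (\<forall>P\<in>{S j (i,t),K cl j (i,t),L cl j (i,t)}. \<forall>R\<in>{B,A i,H (i,t),H (i,\<not>t),F j}. (P,R)\<in>G))
    \<and> ((K cl j (i,\<not>t),B)\<in>G \<longrightarrow> (\<forall>P\<in>{S j (i,\<not>t),K cl j (i,\<not>t)}. \<forall>R\<in>{B,A i,H (i,\<not>t),H (i,t),F j}. (P,R)\<in>G))"
  proof (rule gadget[OF ch])
    show "{B, F j, D j p, D j q, A i, H (i,t), H (i,\<not>t), S j (i,t), S j (i,\<not>t), K cl j (i,t), K cl j (i,\<not>t), L cl j (i,t)} \<subseteq> V"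
      using vs vS by auto
    show "distinct [B, F j, D j p, D j q, A i, H (i,t), H (i,\<not>t), S j (i,t), S j (i,\<not>t), K cl j (i,t), K cl j (i,\<not>t), L cl j (i,t)]"
      using pq unfolding eqs by (simp add: doubleton_eq_iff)
    show "(B, H (i,t)) \<in> G" by (rule Fo[OF vs(1) vs(5)]; unfold eqs; cases t; simp add: doubleton_eq_iff)
    show "(B, H (i,\<not>t)) \<in> G" by (rule Fo[OF vs(1) vs(6)]; unfold eqs; cases t; simp add: doubleton_eq_iff)
    show "(B, F j) \<in> G" by (rule Fo[OF vs(1) vs(7)]; unfold eqs; cases t; simp add: doubleton_eq_iff)
    show "(H (i,t), A i) \<in> G" by (rule Fo[OF vs(5) vs(2)]; unfold eqs; cases t; simp add: doubleton_eq_iff)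
    show "(H (i,\<not>t), A i) \<in> G" by (rule Fo[OF vs(6) vs(2)]; unfold eqs; cases t; simp add: doubleton_eq_iff)
    show "(H (i,t), S j (i,t)) \<in> G" by (rule Fo[OF vs(5) vS(1)]; unfold eqs; cases t; simp add: doubleton_eq_iff)
    show "(H (i,\<not>t), S j (i,\<not>t)) \<in> G" by (rule Fo[OF vs(6) vS(2)]; unfold eqs; cases t; simp add: doubleton_eq_iff)
    show "(A i, S j (i,t)) \<in> G" by (rule Fo[OF vs(2) vS(1)]; unfold eqs; cases t; simp add: doubleton_eq_iff)
    show "(A i, S j (i,\<not>t)) \<in> G" by (rule Fo[OF vs(2) vS(2)]; unfold eqs; cases t; simp add: doubleton_eq_iff)
    show "(S j (i,t), K cl j (i,\<not>t)) \<in> G" by (rule Fo[OF vS(1) vs(8)]; unfold eqs; cases t; simp add: doubleton_eq_iff)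
    show "(S j (i,\<not>t), K cl j (i,t)) \<in> G" by (rule Fo[OF vS(2) vs(9)]; unfold eqs; cases t; simp add: doubleton_eq_iff)
    show "(S j (i,\<not>t), L cl j (i,t)) \<in> G" by (rule Fo[OF vS(2) vs(10)]; unfold eqs; cases t; simp add: doubleton_eq_iff)
    show "(K cl j (i,t), F j) \<in> G" by (rule Fo[OF vs(9) vs(7)]; unfold eqs; cases t; simp add: doubleton_eq_iff)
    show "(K cl j (i,t), D j p) \<in> G" by (rule Fo[OF vs(9) vs(3)]; unfold eqs; cases t; simp add: doubleton_eq_iff)
    show "(K cl j (i,\<not>t), D j p) \<in> G" by (rule Fo[OF vs(8) vs(3)]; unfold eqs; cases t; simp add: doubleton_eq_iff)
    show "(F j, D j p) \<in> G" by (rule Fo[OF vs(7) vs(3)]; unfold eqs; cases t; simp add: doubleton_eq_iff)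
    show "(L cl j (i,t), D j q) \<in> G" by (rule Fo[OF vs(10) vs(4)]; unfold eqs; cases t; simp add: doubleton_eq_iff)
    show "(F j, D j q) \<in> G" by (rule Fo[OF vs(7) vs(4)]; unfold eqs; cases t; simp add: doubleton_eq_iff)
    show "(A i, B) \<notin> G" using Nf qAB by blast
    show "(D j p, B) \<notin> G" using Nf qDp by blast
    show "(D j q, B) \<notin> G" using Nf qDq by blast
    show "(H (i,t), F j) \<notin> G" using Nf qHu by blast
    show "(H (i,\<not>t), F j) \<notin> G" using Nf qHn by blast
    have "sym G" using ch unfolding chordal_def graph_on_def by simp
    then show "(S j (i,t), S j (i,\<not>t)) \<notin> G" using Nf qSS by (meson symD)
    show "(K cl j (i,\<not>t), K cl j (i,t)) \<notin> G" using Nf qK by blast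
  qed
  then show ?thesis .
qed




lemma perj:
  assumes wf: "wf_instance n m cl"
    and sw: "chordal_sandwich (vtx (QI n m cl)) (int_star (QI n m cl)) (forb (QI n m cl)) G"
    and i: "i \<in> {1..n}" and j: "j \<in> Dl m cl i"
  shows "((K cl j (pos i),B)\<in>G \<or> (K cl j (ng i),B)\<in>G)
    \<and> (\<forall>W \<in> {pos i, ng i}. (K cl j W, B) \<in> G \<longrightarrow>
            (\<forall>P \<in> {S j W, K cl j W} \<union> (if in_clause cl j W then {L cl j W} else {}).
               \<forall>R \<in> {B, A i, H W, H (neg W), F j}. (P, R) \<in> G))"
proof -
  obtain t p q where info: "in_clause cl j (i,t)" "\<not> in_clause cl j (i,\<not>t)" "p \<in> {1,2,3}" "q \<in> {1,2,3}" "p \<noteq> q"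
    "K cl j (i,\<not>t) = {EBeta j (i,t), EGamma j p}" "K cl j (i,t) = {EBeta j (i,\<not>t), ELambda j}"
    "L cl j (i,t) = {EBeta j (i,\<not>t), EGamma j q}"
    "(K cl j (i,\<not>t), K cl j (i,t)) \<in> clause_splits cl j" "(K cl j (i,\<not>t), L cl j (i,t)) \<in> clause_splits cl j"
    using clause_info[OF wf j] by blast
  note L = loc[OF sw i j info(3-10)]
  have pn: "{pos i, ng i} = {(i,t),(i,\<not>t)}" unfolding pos_def ng_def by (cases t) auto
  have n1: "neg (i,t) = (i,\<not>t)" "neg (i,\<not>t) = (i,t)" unfolding neg_def by auto
  show ?thesis
  proof
    show "(K cl j (pos i),B)\<in>G \<or> (K cl j (ng i),B)\<in>G"
      using L unfolding pos_def ng_def by (cases t) auto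
  next
    show "\<forall>W \<in> {pos i, ng i}. (K cl j W, B) \<in> G \<longrightarrow>
            (\<forall>P \<in> {S j W, K cl j W} \<union> (if in_clause cl j W then {L cl j W} else {}).
               \<forall>R \<in> {B, A i, H W, H (neg W), F j}. (P, R) \<in> G)"
      unfolding pn using L info(1,2) n1 by auto
  qed
qed

theorem lemma7:
  fixes n m i :: nat and cl :: clauses and G :: "(elem set \<times> elem set) set"
  assumes wf: "wf_instance n m cl"
    and sw: "chordal_sandwich (vtx (QI n m cl)) (int_star (QI n m cl)) (forb (QI n m cl)) G"
    and i: "1 \<le> i" "i \<le> n"
  shows "(\<exists>W \<in> {pos i, ng i}. \<forall>j \<in> Dl m cl i. (K cl j W, B) \<in> G)
       \<and> (\<forall>j \<in> Dl m cl i. \<forall>W \<in> {pos i, ng i}. (K cl j W, B) \<in> G \<longrightarrow>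
            (\<forall>P \<in> {S j W, K cl j W} \<union> (if in_clause cl j W then {L cl j W} else {}).
               \<forall>R \<in> {B, A i, H W, H (neg W), F j}. (P, R) \<in> G))"
proof -
  have iI: "i \<in> {1..n}" using i by simp
  note PJ = perj[OF wf sw iI]
  have SB: "(S j W, B) \<in> G" if "j \<in> Dl m cl i" "W \<in> {pos i, ng i}" "(K cl j W, B) \<in> G" for j W
    using PJ[OF that(1)] that(2,3) by blast
  define Q where "Q = QI n m cl"
  have ch: "chordal (vtx Q) G" and sub: "int_star Q \<subseteq> G" and dis: "G \<inter> forb Q = {}"
    using sw unfolding chordal_sandwich_def Q_def by auto
  have A: "\<exists>W \<in> {pos i, ng i}. \<forall>j \<in> Dl m cl i. (K cl j W, B) \<in> G"
  proof (rule ccontr)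
    assume "\<not> ?thesis"
    then obtain j1 j2 where j1: "j1 \<in> Dl m cl i" "(K cl j1 (pos i), B) \<notin> G"
      and j2: "j2 \<in> Dl m cl i" "(K cl j2 (ng i), B) \<notin> G" by blast
    have s1: "(S j1 (ng i), B) \<in> G" using SB[OF j1(1)] PJ[OF j1(1)] j1(2) by blast
    have s2: "(S j2 (pos i), B) \<in> G" using SB[OF j2(1)] PJ[OF j2(1)] j2(2) by blast
    have qSS: "(S j2 (pos i), S j1 (ng i)) \<in> Q" using mem_SS[OF iI j2(1) j1(1)] Q_def by simp
    have qAB: "(A i, B) \<in> Q" using mem_AB[OF iI] Q_def by simp
    have v: "A i \<in> vtx Q" "B \<in> vtx Q" "S j2 (pos i) \<in> vtx Q" "S j1 (ng i) \<in> vtx Q"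
      using vtxI[OF qSS] vtxI[OF qAB] by auto
    have e1: "(A i, S j2 (pos i)) \<in> G" "(A i, S j1 (ng i)) \<in> G"
      using sub v unfolding int_star_def by (auto simp: A_def S_def pos_def ng_def)
    have n1: "(S j2 (pos i), S j1 (ng i)) \<notin> G" "(A i, B) \<notin> G"
      using dis qSS qAB unfolding forb_def by auto
    show False
      by (rule cross[OF ch, of "A i" B "S j2 (pos i)" "S j1 (ng i)"])
        (use v s1 s2 e1 n1 in \<open>auto simp: A_def S_def B_def pos_def ng_def doubleton_eq_iff\<close>)
  qed
  show ?thesis using A PJ by blast
qed


end
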